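(* Let $A$ be a latin square of order $n$ on symbols $\{0,\dots,n-1\}$ with $k$ pairwise disjoint transversals $T_0,\dots,T_{k-1}$, and let $C$ be a latin square of order $k$ on the symbol set $\{n,\dots,n+k-1\}$ with rows and columns indexed by $\{n,\dots,n+k-1\}$. Define $\widehat{A}_k\subseteq\{0,\dots,n+k-1\}^3$ as follows: every $(a,b,c)\in A\setminus\bigcup_{i=0}^{k-1}T_i$ belongs to $\widehat{A}_k$; for each $i$ and each $(a,b,c)\in T_i$, the triples $(a,b,n+i)$, $(a,n+i,c)$, $(n+i,b,c)$ belong to $\widehat{A}_k$; and every entry $(r,s,u)$ of $C$ belongs to $\widehat{A}_k$. Then $\widehat{A}_k$ is a latin square of order $n+k$ and $$t(\widehat{A}_k)\ \ge\ t(C)\cdot t(A;T_0,\dots,T_{k-1}).$$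
   Context: A latin square of order $m$ on a symbol set $Y$ with $|Y|=m$ is identified with a set of ordered triples $(r,c,s)$ meaning symbol $s$ is in row $r$, column $c$, such that each row and each column contains each symbol exactly once. A transversal is a set of $m$ entries containing exactly one entry from each row and each column, with no symbol repeated. $t(B)$ denotes the number of transversals of a latin square $B$, and $t(A;T_0,\dots,T_{k-1})$ denotes the number of transversals of $A$ that are disjoint from each of $T_0,\dots,T_{k-1}$. *)

theory Defs
  imports Main
begin

type_synonym triple = "nat \<times> nat \<times> nat"

definition latin_square_on :: "nat set \<Rightarrow> nat set \<Rightarrow> nat set \<Rightarrow> triple set \<Rightarrow> bool" where
  "latin_square_on R Cl Y L \<longleftrightarrow>
     finite Y \<and> card R = card Y \<and> card Cl = card Y \<and>
     L \<subseteq> R \<times> Cl \<times> Y \<and>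
     (\<forall>r\<in>R. \<forall>c\<in>Cl. \<exists>!s. (r, c, s) \<in> L) \<and>
     (\<forall>r\<in>R. \<forall>s\<in>Y. \<exists>!c. (r, c, s) \<in> L) \<and>
     (\<forall>c\<in>Cl. \<forall>s\<in>Y. \<exists>!r. (r, c, s) \<in> L)"

definition transversal :: "triple set \<Rightarrow> triple set \<Rightarrow> bool" where
  "transversal L T \<longleftrightarrow>
     T \<subseteq> L \<and>
     inj_on fst T \<and> fst ` T = fst ` L \<and>
     inj_on (\<lambda>e. fst (snd e)) T \<and> (\<lambda>e. fst (snd e)) ` T = (\<lambda>e. fst (snd e)) ` L \<and>
     inj_on (\<lambda>e. snd (snd e)) T"

definition num_transversals :: "triple set \<Rightarrow> nat" where
  "num_transversals L = card {T. transversal L T}"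

text \<open>t(A; T_0, ..., T_{k-1}): number of transversals of A disjoint from each T_i.\<close>
definition num_transversals_disj :: "triple set \<Rightarrow> nat \<Rightarrow> (nat \<Rightarrow> triple set) \<Rightarrow> nat" where
  "num_transversals_disj A k Ts =
     card {T. transversal A T \<and> (\<forall>i<k. T \<inter> Ts i = {})}"

definition Ahat :: "nat \<Rightarrow> nat \<Rightarrow> triple set \<Rightarrow> (nat \<Rightarrow> triple set) \<Rightarrow> triple set \<Rightarrow> triple set" where
  "Ahat n k A Ts C =
     (A - (\<Union>i<k. Ts i))
     \<union> (\<Union>i<k. {(a, b, n + i) | a b c. (a, b, c) \<in> Ts i})
     \<union> (\<Union>i<k. {(a, n + i, c) | a b c. (a, b, c) \<in> Ts i})
     \<union> (\<Union>i<k. {(n + i, b, c) | a b c. (a, b, c) \<in> Ts i})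
     \<union> C"

end

theory Submission imports Defs begin
lemma ls_sub: "latin_square_on R Cl Y L \<Longrightarrow> L \<subseteq> R \<times> Cl \<times> Y"
  by (simp add: latin_square_on_def)
lemma ls_range: "latin_square_on R Cl Y L \<Longrightarrow> (a,b,c)\<in>L \<Longrightarrow> a\<in>R \<and> b\<in>Cl \<and> c\<in>Y"
  using ls_sub by blast
lemma ls_1: "latin_square_on R Cl Y L \<Longrightarrow> \<forall>r\<in>R. \<forall>c\<in>Cl. \<exists>!s. (r, c, s) \<in> L"
  by (simp add: latin_square_on_def)
lemma ls_2: "latin_square_on R Cl Y L \<Longrightarrow> \<forall>r\<in>R. \<forall>s\<in>Y. \<exists>!c. (r, c, s) \<in> L"
  by (simp add: latin_square_on_def)
lemma ls_3: "latin_square_on R Cl Y L \<Longrightarrow> \<forall>c\<in>Cl. \<forall>s\<in>Y. \<exists>!r. (r, c, s) \<in> L"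
  by (simp add: latin_square_on_def)
lemma ls_cell: "latin_square_on R Cl Y L \<Longrightarrow> (a,b,c)\<in>L \<Longrightarrow> (a,b,c')\<in>L \<Longrightarrow> c=c'"
proof -
  assume L: "latin_square_on R Cl Y L" and 1: "(a,b,c)\<in>L" and 2: "(a,b,c')\<in>L"
  then have "a\<in>R" "b\<in>Cl" using ls_range by blast+
  with ls_1[OF L] have "\<exists>!s. (a,b,s)\<in>L" by blast
  with 1 2 show ?thesis by blast
qed
lemma ls_row: "latin_square_on R Cl Y L \<Longrightarrow> (a,b,c)\<in>L \<Longrightarrow> (a,b',c)\<in>L \<Longrightarrow> b=b'"
proof -
  assume L: "latin_square_on R Cl Y L" and 1: "(a,b,c)\<in>L" and 2: "(a,b',c)\<in>L"
  then have "a\<in>R" "c\<in>Y" using ls_range by blast+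
  with ls_2[OF L] have "\<exists>!s. (a,s,c)\<in>L" by blast
  with 1 2 show ?thesis by blast
qed
lemma ls_col: "latin_square_on R Cl Y L \<Longrightarrow> (a,b,c)\<in>L \<Longrightarrow> (a',b,c)\<in>L \<Longrightarrow> a=a'"
proof -
  assume L: "latin_square_on R Cl Y L" and 1: "(a,b,c)\<in>L" and 2: "(a',b,c)\<in>L"
  then have "b\<in>Cl" "c\<in>Y" using ls_range by blast+
  with ls_3[OF L] have "\<exists>!s. (s,b,c)\<in>L" by blast
  with 1 2 show ?thesis by blast
qed
lemma ls_cell_ex: "latin_square_on R Cl Y L \<Longrightarrow> a\<in>R \<Longrightarrow> b\<in>Cl \<Longrightarrow> \<exists>c. (a,b,c)\<in>L"
  using ls_1 by blast
lemma ls_row_ex: "latin_square_on R Cl Y L \<Longrightarrow> a\<in>R \<Longrightarrow> c\<in>Y \<Longrightarrow> \<exists>b. (a,b,c)\<in>L"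
  using ls_2 by blast
lemma ls_col_ex: "latin_square_on R Cl Y L \<Longrightarrow> b\<in>Cl \<Longrightarrow> c\<in>Y \<Longrightarrow> \<exists>a. (a,b,c)\<in>L"
  using ls_3 by blast
lemma tr_inj1: "transversal L T \<Longrightarrow> inj_on fst T" by (simp add: transversal_def)
lemma tr_inj2: "transversal L T \<Longrightarrow> inj_on (\<lambda>e. fst (snd e)) T" by (simp add: transversal_def)
lemma tr_inj3: "transversal L T \<Longrightarrow> inj_on (\<lambda>e. snd (snd e)) T" by (simp add: transversal_def)
lemma tr_row: "transversal L T \<Longrightarrow> (a,b,c)\<in>T \<Longrightarrow> (a,b',c')\<in>T \<Longrightarrow> b=b' \<and> c=c'"
proof -
  assume t: "transversal L T" and 1: "(a,b,c)\<in>T" and 2: "(a,b',c')\<in>T"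
  have "(a,b,c) = (a,b',c')" by (rule inj_onD[OF tr_inj1[OF t]]) (simp_all add: 1 2)
  then show ?thesis by simp
qed
lemma tr_col: "transversal L T \<Longrightarrow> (a,b,c)\<in>T \<Longrightarrow> (a',b,c')\<in>T \<Longrightarrow> a=a' \<and> c=c'"
proof -
  assume t: "transversal L T" and 1: "(a,b,c)\<in>T" and 2: "(a',b,c')\<in>T"
  have "(a,b,c) = (a',b,c')" by (rule inj_onD[OF tr_inj2[OF t]]) (simp_all add: 1 2)
  then show ?thesis by simp
qed
lemma tr_sym: "transversal L T \<Longrightarrow> (a,b,c)\<in>T \<Longrightarrow> (a',b',c)\<in>T \<Longrightarrow> a=a' \<and> b=b'"
proof -
  assume t: "transversal L T" and 1: "(a,b,c)\<in>T" and 2: "(a',b',c)\<in>T"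
  have "(a,b,c) = (a',b',c)" by (rule inj_onD[OF tr_inj3[OF t]]) (simp_all add: 1 2)
  then show ?thesis by simp
qed
lemma ls_fst: "latin_square_on R R R L \<Longrightarrow> fst ` L = R"
proof
  assume L: "latin_square_on R R R L"
  show "fst ` L \<subseteq> R" using ls_sub[OF L] by auto
  show "R \<subseteq> fst ` L"
  proof
    fix a assume "a \<in> R"
    then obtain c where "(a,a,c)\<in>L" using ls_cell_ex[OF L] by blast
    then show "a \<in> fst ` L" by force
  qed
qed
lemma ls_snd: "latin_square_on R R R L \<Longrightarrow> (\<lambda>e. fst (snd e)) ` L = R"
proof
  assume L: "latin_square_on R R R L"
  show "(\<lambda>e. fst (snd e)) ` L \<subseteq> R" using ls_sub[OF L] by auto
  show "R \<subseteq> (\<lambda>e. fst (snd e)) ` L"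
  proof
    fix a assume "a \<in> R"
    then obtain c where "(a,a,c)\<in>L" using ls_cell_ex[OF L] by blast
    then show "a \<in> (\<lambda>e. fst (snd e)) ` L" by force
  qed
qed
lemma tr_sub: "transversal L T \<Longrightarrow> T \<subseteq> L" by (simp add: transversal_def)
lemma tr_fst: "transversal L T \<Longrightarrow> fst ` T = fst ` L" by (simp add: transversal_def)
lemma tr_snd: "transversal L T \<Longrightarrow> (\<lambda>e. fst (snd e)) ` T = (\<lambda>e. fst (snd e)) ` L" by (simp add: transversal_def)

context
  fixes n k :: nat and A C :: "triple set" and Ts :: "nat \<Rightarrow> triple set"
  assumes A: "latin_square_on {0..<n} {0..<n} {0..<n} A"
    and T: "\<forall>i<k. transversal A (Ts i)"
    and disj: "\<forall>i<k. \<forall>j<k. i \<noteq> j \<longrightarrow> Ts i \<inter> Ts j = {}"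
    and C: "latin_square_on {n..<n+k} {n..<n+k} {n..<n+k} C"
begin

lemma Ti: "i<k \<Longrightarrow> transversal A (Ts i)" using T by blast
lemma Arange: "(a,b,c)\<in>A \<Longrightarrow> a<n \<and> b<n \<and> c<n"
  using ls_range[OF A] by simp
lemma Crange: "(a,b,c)\<in>C \<Longrightarrow> n\<le>a \<and> a<n+k \<and> n\<le>b \<and> b<n+k \<and> n\<le>c \<and> c<n+k"
  using ls_range[OF C] by simp
lemma Trange: "i<k \<Longrightarrow> (a,b,c)\<in>Ts i \<Longrightarrow> a<n \<and> b<n \<and> c<n"
  using Arange tr_sub[OF Ti] by blast
lemma Tdisj: "i<k \<Longrightarrow> j<k \<Longrightarrow> x\<in>Ts i \<Longrightarrow> x\<in>Ts j \<Longrightarrow> i=j"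
  using disj by blast

lemma Trow_ex: "i<k \<Longrightarrow> a<n \<Longrightarrow> \<exists>b c. (a,b,c)\<in>Ts i"
proof -
  assume i: "i<k" and a: "a<n"
  then have "a \<in> fst ` Ts i" using tr_fst[OF Ti[OF i]] ls_fst[OF A] by simp
  then show ?thesis by force
qed
lemma Tcol_ex: "i<k \<Longrightarrow> b<n \<Longrightarrow> \<exists>a c. (a,b,c)\<in>Ts i"
proof -
  assume i: "i<k" and b: "b<n"
  then have "b \<in> (\<lambda>e. fst (snd e)) ` Ts i" using tr_snd[OF Ti[OF i]] ls_snd[OF A] by simp
  then show ?thesis by force
qed
lemma Tsym_ex: "i<k \<Longrightarrow> c<n \<Longrightarrow> \<exists>a b. (a,b,c)\<in>Ts i"
proof -
  assume i: "i<k" and c: "c<n"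
  have sub: "Ts i \<subseteq> {0..<n} \<times> {0..<n} \<times> {0..<n}" using Trange[OF i] by auto
  have fin: "finite (Ts i)" by (rule finite_subset[OF sub]) simp
  have "card (Ts i) = card (fst ` Ts i)" using card_image[OF tr_inj1[OF Ti[OF i]]] by simp
  also have "\<dots> = n" using tr_fst[OF Ti[OF i]] ls_fst[OF A] by simp
  finally have "card ((\<lambda>e. snd (snd e)) ` Ts i) = n" using card_image[OF tr_inj3[OF Ti[OF i]]] by simp
  moreover have "(\<lambda>e. snd (snd e)) ` Ts i \<subseteq> {0..<n}" using sub by auto
  ultimately have "(\<lambda>e. snd (snd e)) ` Ts i = {0..<n}"
    by (simp add: card_subset_eq)
  then have "c \<in> (\<lambda>e. snd (snd e)) ` Ts i" using c by auto
  then show ?thesis by force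
qed

lemma Ahat_mem: "((x,y,z) \<in> Ahat n k A Ts C) \<longleftrightarrow>
 ((x,y,z)\<in>A \<and> (\<forall>i<k. (x,y,z)\<notin>Ts i))
 \<or> (\<exists>i<k. z = n+i \<and> (\<exists>c. (x,y,c)\<in>Ts i))
 \<or> (\<exists>i<k. y = n+i \<and> (\<exists>b. (x,b,z)\<in>Ts i))
 \<or> (\<exists>i<k. x = n+i \<and> (\<exists>a. (a,y,z)\<in>Ts i))
 \<or> (x,y,z)\<in>C"
  unfolding Ahat_def by auto


lemma TA: "i<k \<Longrightarrow> (a,b,c)\<in>Ts i \<Longrightarrow> (a,b,c)\<in>A"
  using tr_sub[OF Ti] by blast

lemma cell: "r < n+k \<Longrightarrow> c < n+k \<Longrightarrow> \<exists>!s. (r,c,s) \<in> Ahat n k A Ts C"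
proof -
  assume r: "r < n+k" and c: "c < n+k"
  show ?thesis
  proof (cases "r<n")
    case rn: True
    show ?thesis
    proof (cases "c<n")
      case cn: True
      obtain s where s: "(r,c,s)\<in>A" using ls_cell_ex[OF A] rn cn by auto
      show ?thesis
      proof (cases "\<exists>i<k. (r,c,s)\<in>Ts i")
        case True
        then obtain i where i: "i<k" "(r,c,s)\<in>Ts i" by blast
        have "(r,c,n+i) \<in> Ahat n k A Ts C" unfolding Ahat_mem using i by blast
        moreover have "s' = n+i" if h: "(r,c,s') \<in> Ahat n k A Ts C" for s'
          using h[unfolded Ahat_mem]
        proof (elim disjE exE conjE)
          assume "(r,c,s')\<in>A" "\<forall>i<k. (r, c, s') \<notin> Ts i"
          then show ?thesis using ls_cell[OF A s] i by blast
        next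
          fix j c' assume j: "j<k" "s' = n+j" "(r,c,c')\<in>Ts j"
          then have "c' = s" using ls_cell[OF A s TA] by blast
          then show ?thesis using Tdisj[OF i(1) j(1) i(2)] j by simp
        qed (use rn cn in \<open>auto dest: Crange\<close>)
        ultimately show ?thesis by blast
      next
        case False
        have "(r,c,s) \<in> Ahat n k A Ts C" unfolding Ahat_mem using s False by blast
        moreover have "s' = s" if h: "(r,c,s') \<in> Ahat n k A Ts C" for s'
          using h[unfolded Ahat_mem]
        proof (elim disjE exE conjE)
          assume "(r,c,s')\<in>A" then show ?thesis using ls_cell[OF A s] by blast
        next
          fix j c' assume j: "j<k" "s' = n+j" "(r,c,c')\<in>Ts j"
          then have "c' = s" using ls_cell[OF A s TA] by blast
          then show ?thesis using False j by blast
        qed (use rn cn in \<open>auto dest: Crange\<close>)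
        ultimately show ?thesis by blast
      qed
    next
      case cn: False
      then obtain i where i: "i<k" "c = n+i" using c by (metis add_diff_inverse_nat add_less_cancel_left)
      obtain b z where bz: "(r,b,z)\<in>Ts i" using Trow_ex[OF i(1) rn] by blast
      have "(r,c,z) \<in> Ahat n k A Ts C" unfolding Ahat_mem using i bz by blast
      moreover have "s' = z" if h: "(r,c,s') \<in> Ahat n k A Ts C" for s'
        using h[unfolded Ahat_mem]
      proof (elim disjE exE conjE)
        fix j b' assume j: "j<k" "c = n+j" "(r,b',s')\<in>Ts j"
        then have "j = i" using i by simp
        then show ?thesis using tr_row[OF Ti[OF i(1)] bz] j by blast
      qed (use rn cn Crange Arange Trange in force)+
      ultimately show ?thesis by blast
    qed
  next
    case rn: False
    then obtain i where i: "i<k" "r = n+i" using r by (metis add_diff_inverse_nat add_less_cancel_left)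
    show ?thesis
    proof (cases "c<n")
      case cn: True
      obtain a z where az: "(a,c,z)\<in>Ts i" using Tcol_ex[OF i(1) cn] by blast
      have "(r,c,z) \<in> Ahat n k A Ts C" unfolding Ahat_mem using i az by blast
      moreover have "s' = z" if h: "(r,c,s') \<in> Ahat n k A Ts C" for s'
        using h[unfolded Ahat_mem]
      proof (elim disjE exE conjE)
        fix j a' assume j: "j<k" "r = n+j" "(a',c,s')\<in>Ts j"
        then have "j = i" using i by simp
        then show ?thesis using tr_col[OF Ti[OF i(1)] az] j by blast
      qed (use rn cn Crange Arange Trange in force)+
      ultimately show ?thesis by blast
    next
      case cn: False
      have "\<exists>s. (r,c,s)\<in>C" using ls_cell_ex[OF C] rn cn r c by simp
      then obtain s where s: "(r,c,s)\<in>C" by blast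
      have "(r,c,s) \<in> Ahat n k A Ts C" unfolding Ahat_mem using s by blast
      moreover have "s' = s" if h: "(r,c,s') \<in> Ahat n k A Ts C" for s'
        using h[unfolded Ahat_mem]
      proof (elim disjE exE conjE)
        assume "(r,c,s')\<in>C" then show ?thesis using ls_cell[OF C s] by blast
      qed (use rn cn Crange Arange Trange in force)+
      ultimately show ?thesis by blast
    qed
  qed
qed


lemma rowsym: "r < n+k \<Longrightarrow> s < n+k \<Longrightarrow> \<exists>!c. (r,c,s) \<in> Ahat n k A Ts C"
proof -
  assume r: "r < n+k" and s: "s < n+k"
  show ?thesis
  proof (cases "r<n")
    case rn: True
    show ?thesis
    proof (cases "s<n")
      case sn: True
      obtain b where b: "(r,b,s)\<in>A" using ls_row_ex[OF A] rn sn by auto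
      show ?thesis
      proof (cases "\<exists>i<k. (r,b,s)\<in>Ts i")
        case True
        then obtain i where i: "i<k" "(r,b,s)\<in>Ts i" by blast
        have "(r,n+i,s) \<in> Ahat n k A Ts C" unfolding Ahat_mem using i by blast
        moreover have "c' = n+i" if h: "(r,c',s) \<in> Ahat n k A Ts C" for c'
          using h[unfolded Ahat_mem]
        proof (elim disjE exE conjE)
          assume "(r,c',s)\<in>A" "\<forall>i<k. (r, c', s) \<notin> Ts i"
          then show ?thesis using ls_row[OF A b] i by blast
        next
          fix j b' assume j: "j<k" "c' = n+j" "(r,b',s)\<in>Ts j"
          then have "b' = b" using ls_row[OF A b TA] by blast
          then show ?thesis using Tdisj[OF i(1) j(1) i(2)] j by simp
        qed (use rn sn in \<open>auto dest: Crange\<close>)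
        ultimately show ?thesis by blast
      next
        case False
        have "(r,b,s) \<in> Ahat n k A Ts C" unfolding Ahat_mem using b False by blast
        moreover have "c' = b" if h: "(r,c',s) \<in> Ahat n k A Ts C" for c'
          using h[unfolded Ahat_mem]
        proof (elim disjE exE conjE)
          assume "(r,c',s)\<in>A" then show ?thesis using ls_row[OF A b] by blast
        next
          fix j b' assume j: "j<k" "c' = n+j" "(r,b',s)\<in>Ts j"
          then have "b' = b" using ls_row[OF A b TA] by blast
          then show ?thesis using False j by blast
        qed (use rn sn in \<open>auto dest: Crange\<close>)
        ultimately show ?thesis by blast
      qed
    next
      case sn: False
      then obtain i where i: "i<k" "s = n+i" using s by (metis add_diff_inverse_nat add_less_cancel_left)
      obtain b z where bz: "(r,b,z)\<in>Ts i" using Trow_ex[OF i(1) rn] by blast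
      have "(r,b,s) \<in> Ahat n k A Ts C" unfolding Ahat_mem using i bz by blast
      moreover have "c' = b" if h: "(r,c',s) \<in> Ahat n k A Ts C" for c'
        using h[unfolded Ahat_mem]
      proof (elim disjE exE conjE)
        fix j z' assume j: "j<k" "s = n+j" "(r,c',z')\<in>Ts j"
        then have "j = i" using i by simp
        then show ?thesis using tr_row[OF Ti[OF i(1)] bz] j by blast
      qed (use rn sn Crange Arange Trange in force)+
      ultimately show ?thesis by blast
    qed
  next
    case rn: False
    then obtain i where i: "i<k" "r = n+i" using r by (metis add_diff_inverse_nat add_less_cancel_left)
    show ?thesis
    proof (cases "s<n")
      case sn: True
      obtain a b where ab: "(a,b,s)\<in>Ts i" using Tsym_ex[OF i(1) sn] by blast
      have "(r,b,s) \<in> Ahat n k A Ts C" unfolding Ahat_mem using i ab by blast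
      moreover have "c' = b" if h: "(r,c',s) \<in> Ahat n k A Ts C" for c'
        using h[unfolded Ahat_mem]
      proof (elim disjE exE conjE)
        fix j a' assume j: "j<k" "r = n+j" "(a',c',s)\<in>Ts j"
        then have "j = i" using i by simp
        then show ?thesis using tr_sym[OF Ti[OF i(1)] ab] j by blast
      qed (use rn sn Crange Arange Trange in force)+
      ultimately show ?thesis by blast
    next
      case sn: False
      have "\<exists>c. (r,c,s)\<in>C" using ls_row_ex[OF C] rn sn r s by simp
      then obtain b where b: "(r,b,s)\<in>C" by blast
      have "(r,b,s) \<in> Ahat n k A Ts C" unfolding Ahat_mem using b by blast
      moreover have "c' = b" if h: "(r,c',s) \<in> Ahat n k A Ts C" for c'
        using h[unfolded Ahat_mem]
      proof (elim disjE exE conjE)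
        assume "(r,c',s)\<in>C" then show ?thesis using ls_row[OF C b] by blast
      qed (use rn sn Crange Arange Trange in force)+
      ultimately show ?thesis by blast
    qed
  qed
qed

lemma colsym: "c < n+k \<Longrightarrow> s < n+k \<Longrightarrow> \<exists>!r. (r,c,s) \<in> Ahat n k A Ts C"
proof -
  assume c: "c < n+k" and s: "s < n+k"
  show ?thesis
  proof (cases "c<n")
    case cn: True
    show ?thesis
    proof (cases "s<n")
      case sn: True
      obtain a where a: "(a,c,s)\<in>A" using ls_col_ex[OF A] cn sn by auto
      show ?thesis
      proof (cases "\<exists>i<k. (a,c,s)\<in>Ts i")
        case True
        then obtain i where i: "i<k" "(a,c,s)\<in>Ts i" by blast
        have "(n+i,c,s) \<in> Ahat n k A Ts C" unfolding Ahat_mem using i by blast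
        moreover have "r' = n+i" if h: "(r',c,s) \<in> Ahat n k A Ts C" for r'
          using h[unfolded Ahat_mem]
        proof (elim disjE exE conjE)
          assume "(r',c,s)\<in>A" "\<forall>i<k. (r', c, s) \<notin> Ts i"
          then show ?thesis using ls_col[OF A a] i by blast
        next
          fix j a' assume j: "j<k" "r' = n+j" "(a',c,s)\<in>Ts j"
          then have "a' = a" using ls_col[OF A a TA] by blast
          then show ?thesis using Tdisj[OF i(1) j(1) i(2)] j by simp
        qed (use cn sn in \<open>auto dest: Crange\<close>)
        ultimately show ?thesis by blast
      next
        case False
        have "(a,c,s) \<in> Ahat n k A Ts C" unfolding Ahat_mem using a False by blast
        moreover have "r' = a" if h: "(r',c,s) \<in> Ahat n k A Ts C" for r'
          using h[unfolded Ahat_mem]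
        proof (elim disjE exE conjE)
          assume "(r',c,s)\<in>A" then show ?thesis using ls_col[OF A a] by blast
        next
          fix j a' assume j: "j<k" "r' = n+j" "(a',c,s)\<in>Ts j"
          then have "a' = a" using ls_col[OF A a TA] by blast
          then show ?thesis using False j by blast
        qed (use cn sn in \<open>auto dest: Crange\<close>)
        ultimately show ?thesis by blast
      qed
    next
      case sn: False
      then obtain i where i: "i<k" "s = n+i" using s by (metis add_diff_inverse_nat add_less_cancel_left)
      obtain a z where az: "(a,c,z)\<in>Ts i" using Tcol_ex[OF i(1) cn] by blast
      have "(a,c,s) \<in> Ahat n k A Ts C" unfolding Ahat_mem using i az by blast
      moreover have "r' = a" if h: "(r',c,s) \<in> Ahat n k A Ts C" for r'
        using h[unfolded Ahat_mem]
      proof (elim disjE exE conjE)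
        fix j z' assume j: "j<k" "s = n+j" "(r',c,z')\<in>Ts j"
        then have "j = i" using i by simp
        then show ?thesis using tr_col[OF Ti[OF i(1)] az] j by blast
      qed (use cn sn Crange Arange Trange in force)+
      ultimately show ?thesis by blast
    qed
  next
    case cn: False
    then obtain i where i: "i<k" "c = n+i" using c by (metis add_diff_inverse_nat add_less_cancel_left)
    show ?thesis
    proof (cases "s<n")
      case sn: True
      obtain a b where ab: "(a,b,s)\<in>Ts i" using Tsym_ex[OF i(1) sn] by blast
      have "(a,c,s) \<in> Ahat n k A Ts C" unfolding Ahat_mem using i ab by blast
      moreover have "r' = a" if h: "(r',c,s) \<in> Ahat n k A Ts C" for r'
        using h[unfolded Ahat_mem]
      proof (elim disjE exE conjE)
        fix j b' assume j: "j<k" "c = n+j" "(r',b',s)\<in>Ts j"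
        then have "j = i" using i by simp
        then show ?thesis using tr_sym[OF Ti[OF i(1)] ab] j by blast
      qed (use cn sn Crange Arange Trange in force)+
      ultimately show ?thesis by blast
    next
      case sn: False
      have "\<exists>r. (r,c,s)\<in>C" using ls_col_ex[OF C] cn sn c s by simp
      then obtain a where a: "(a,c,s)\<in>C" by blast
      have "(a,c,s) \<in> Ahat n k A Ts C" unfolding Ahat_mem using a by blast
      moreover have "r' = a" if h: "(r',c,s) \<in> Ahat n k A Ts C" for r'
        using h[unfolded Ahat_mem]
      proof (elim disjE exE conjE)
        assume "(r',c,s)\<in>C" then show ?thesis using ls_col[OF C a] by blast
      qed (use cn sn Crange Arange Trange in force)+
      ultimately show ?thesis by blast
    qed
  qed
qed

lemma Ahat_range: "(x,y,z) \<in> Ahat n k A Ts C \<Longrightarrow> x<n+k \<and> y<n+k \<and> z<n+k"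
  unfolding Ahat_mem by (auto dest: Crange Arange Trange)

lemma Ahat_latin: "latin_square_on {0..<n+k} {0..<n+k} {0..<n+k} (Ahat n k A Ts C)"
  unfolding latin_square_on_def using cell rowsym colsym Ahat_range by auto


lemma Crange': "x\<in>C \<Longrightarrow> n \<le> fst x \<and> fst x < n+k \<and> n \<le> fst (snd x) \<and> fst (snd x) < n+k \<and> n \<le> snd (snd x) \<and> snd (snd x) < n+k"
  using Crange by (cases x) auto
lemma Arange': "x\<in>A \<Longrightarrow> fst x < n \<and> fst (snd x) < n \<and> snd (snd x) < n"
  using Arange by (cases x) auto

lemma split_ST:
  assumes S: "transversal C S" and TT: "transversal A T"
  shows "(S\<union>T) \<inter> {e. n \<le> fst e} = S" "(S\<union>T) \<inter> {e. fst e < n} = T"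
  using tr_sub[OF S] tr_sub[OF TT] Crange' Arange' by fastforce+

lemma union_tr:
  assumes S: "transversal C S" and TT: "transversal A T" and dj: "\<forall>i<k. T \<inter> Ts i = {}"
  shows "transversal (Ahat n k A Ts C) (S \<union> T)"
proof -
  have SC: "S \<subseteq> C" and TA': "T \<subseteq> A" using tr_sub[OF S] tr_sub[OF TT] by auto
  have "S \<subseteq> Ahat n k A Ts C"
  proof
    fix x assume "x \<in> S" then have "x \<in> C" using SC by blast
    then show "x \<in> Ahat n k A Ts C" by (simp add: Ahat_def)
  qed
  moreover have "T \<subseteq> Ahat n k A Ts C"
  proof
    fix x assume x: "x \<in> T" then have "x \<in> A - (\<Union>i<k. Ts i)" using TA' dj by blast
    then show "x \<in> Ahat n k A Ts C" by (simp add: Ahat_def)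
  qed
  ultimately have sub: "S \<union> T \<subseteq> Ahat n k A Ts C" by blast
  have d1: "fst ` S \<inter> fst ` T = {}"
  proof -
    have "\<forall>x\<in>S. n \<le> fst x" using SC Crange' by blast
    then have "fst ` S \<subseteq> {n..}" by auto
    moreover have "\<forall>x\<in>T. fst x < n" using TA' Arange' by blast
    then have "fst ` T \<subseteq> {..<n}" by auto
    moreover have "{n..} \<inter> {..<n} = ({}::nat set)" by auto
    ultimately show ?thesis by blast
  qed
  have d2: "(\<lambda>e. fst (snd e)) ` S \<inter> (\<lambda>e. fst (snd e)) ` T = {}"
  proof -
    have "\<forall>x\<in>S. n \<le> fst (snd x)" using SC Crange' by blast
    then have "(\<lambda>e. fst (snd e)) ` S \<subseteq> {n..}" by auto
    moreover have "\<forall>x\<in>T. fst (snd x) < n" using TA' Arange' by blast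
    then have "(\<lambda>e. fst (snd e)) ` T \<subseteq> {..<n}" by auto
    moreover have "{n..} \<inter> {..<n} = ({}::nat set)" by auto
    ultimately show ?thesis by blast
  qed
  have d3: "(\<lambda>e. snd (snd e)) ` S \<inter> (\<lambda>e. snd (snd e)) ` T = {}"
  proof -
    have "\<forall>x\<in>S. n \<le> snd (snd x)" using SC Crange' by blast
    then have "(\<lambda>e. snd (snd e)) ` S \<subseteq> {n..}" by auto
    moreover have "\<forall>x\<in>T. snd (snd x) < n" using TA' Arange' by blast
    then have "(\<lambda>e. snd (snd e)) ` T \<subseteq> {..<n}" by auto
    moreover have "{n..} \<inter> {..<n} = ({}::nat set)" by auto
    ultimately show ?thesis by blast
  qed
  have i1: "inj_on fst (S \<union> T)"
    unfolding inj_on_Un using tr_inj1[OF S] tr_inj1[OF TT] d1 by blast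
  have i2: "inj_on (\<lambda>e. fst (snd e)) (S \<union> T)"
    unfolding inj_on_Un using tr_inj2[OF S] tr_inj2[OF TT] d2 by blast
  have i3: "inj_on (\<lambda>e. snd (snd e)) (S \<union> T)"
    unfolding inj_on_Un using tr_inj3[OF S] tr_inj3[OF TT] d3 by blast
  have "fst ` (S \<union> T) = {n..<n+k} \<union> {0..<n}"
    using tr_fst[OF S] tr_fst[OF TT] ls_fst[OF C] ls_fst[OF A] by (simp add: image_Un)
  also have "\<dots> = fst ` Ahat n k A Ts C" using ls_fst[OF Ahat_latin] by auto
  finally have f1: "fst ` (S \<union> T) = fst ` Ahat n k A Ts C" .
  have "(\<lambda>e. fst (snd e)) ` (S \<union> T) = {n..<n+k} \<union> {0..<n}"
    using tr_snd[OF S] tr_snd[OF TT] ls_snd[OF C] ls_snd[OF A] by (simp add: image_Un)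
  also have "\<dots> = (\<lambda>e. fst (snd e)) ` Ahat n k A Ts C" using ls_snd[OF Ahat_latin] by auto
  finally have f2: "(\<lambda>e. fst (snd e)) ` (S \<union> T) = (\<lambda>e. fst (snd e)) ` Ahat n k A Ts C" .
  show ?thesis unfolding transversal_def by (intro conjI sub i1 f1 i2 f2 i3)
qed

lemma count_ineq:
  "num_transversals (Ahat n k A Ts C) \<ge> num_transversals C * num_transversals_disj A k Ts"
proof -
  define X where "X = {S. transversal C S}"
  define Y where "Y = {T. transversal A T \<and> (\<forall>i<k. T \<inter> Ts i = {})}"
  define Z where "Z = {T. transversal (Ahat n k A Ts C) T}"
  have finAh: "finite (Ahat n k A Ts C)"
  proof (rule finite_subset)
    show "Ahat n k A Ts C \<subseteq> {0..<n+k} \<times> {0..<n+k} \<times> {0..<n+k}"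
      using ls_sub[OF Ahat_latin] .
  qed simp
  have finZ: "finite Z"
  proof (rule finite_subset)
    show "Z \<subseteq> Pow (Ahat n k A Ts C)" unfolding Z_def using tr_sub by blast
  qed (use finAh in simp)
  have inj: "inj_on (\<lambda>(S,T). S \<union> T) (X \<times> Y)"
  proof (rule inj_onI, clarify)
    fix S T S' T' assume "S \<in> X" "T \<in> Y" "S' \<in> X" "T' \<in> Y" and eq: "S \<union> T = S' \<union> T'"
    then have "transversal C S" "transversal A T" "transversal C S'" "transversal A T'"
      unfolding X_def Y_def by auto
    then show "S = S' \<and> T = T'" using split_ST eq by metis
  qed
  have img: "(\<lambda>(S,T). S \<union> T) ` (X \<times> Y) \<subseteq> Z"
    unfolding X_def Y_def Z_def using union_tr by auto
  have "num_transversals C * num_transversals_disj A k Ts = card (X \<times> Y)"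
    unfolding num_transversals_def num_transversals_disj_def X_def Y_def by (simp add: card_cartesian_product)
  also have "\<dots> = card ((\<lambda>(S,T). S \<union> T) ` (X \<times> Y))" using card_image[OF inj] by simp
  also have "\<dots> \<le> card Z" using card_mono[OF finZ img] .
  finally show ?thesis unfolding num_transversals_def Z_def .
qed

end

theorem mainTheorem4:
  fixes n k :: nat and A C :: "triple set" and Ts :: "nat \<Rightarrow> triple set"
  assumes A: "latin_square_on {0..<n} {0..<n} {0..<n} A"
    and T: "\<forall>i<k. transversal A (Ts i)"
    and disj: "\<forall>i<k. \<forall>j<k. i \<noteq> j \<longrightarrow> Ts i \<inter> Ts j = {}"
    and C: "latin_square_on {n..<n+k} {n..<n+k} {n..<n+k} C"
  shows "latin_square_on {0..<n+k} {0..<n+k} {0..<n+k} (Ahat n k A Ts C)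
         \<and> num_transversals (Ahat n k A Ts C)
             \<ge> num_transversals C * num_transversals_disj A k Ts"
  using Ahat_latin[OF A T disj C] count_ineq[OF A T disj C] by blast

end
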